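(* Let $R$ be a ring with identity, $(S,\leq)$ a strictly ordered monoid which is quasitotally ordered, and $\omega:S\to\mathrm{End}(R)$ a monoid homomorphism. Assume $R$ is $(S,\omega)$-Armendariz, and let $A=R[[S,\omega]]$. (1) If $A$ is a generalized right Baer ring, then $R$ is a generalized right Baer ring. (2) If moreover $R$ is $S$-compatible and $A$ is a generalized right quasi-Baer ring, then $R$ is a generalized right quasi-Baer ring.
   Context: All rings are associative with identity. For a nonempty subset $X$ of a ring $R$, $r_R(X)=\{a\in R : xa=0 \text{ for all } x\in X\}$ is its right annihilator, and for a positive integer $n$, $X^n$ denotes the set of all products $a_1a_2\cdots a_n$ with $a_i\in X$ for $1\le i\le n$. A ring $R$ is generalized right Baer if for every nonempty subset $X$ of $R$ there exist a positive integer $n$ (depending on $X$) and an idempotent $e\in R$ with $r_R(X^n)=eR$. A ring $R$ is generalized right quasi-Baer if for every right ideal $I$ of $R$ there exist a positive integer $n$ (depending on $I$) and an idempotent $e\in R$ with $r_R(I^n)=eR$. An ordered monoid $(S,\leq)$ is a monoid with a partial order such that $u\le v$ implies $ut\le vt$ and $tu\le tv$ for all $t\in S$; it is strictly ordered if $u<v$ implies $ut<vt$ and $tu<tv$ for all $t\in S$. It is quasitotally ordered if $\leq$ can be refined to an order $\preceq$ with respect to which $S$ is a strictly totally ordered monoid. A subset of $S$ is artinian if every strictly decreasing sequence in it is finite, and narrow if every subset of pairwise incomparable elements is finite. Given a ring $R$, a strictly ordered monoid $(S,\le)$ and a monoid homomorphism $\omega:S\to\mathrm{End}(R)$, $s\mapsto\omega_s$,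 the ring of skew generalized power series $R[[S,\omega]]$ is the set of all maps $f:S\to R$ whose support $\mathrm{supp}(f)=\{s\in S: f(s)\neq 0\}$ is artinian and narrow, with pointwise addition and multiplication $(fg)(s)=\sum_{(u,v)\in X_s(f,g)} f(u)\,\omega_u(g(v))$, where $X_s(f,g)=\{(u,v)\in S\times S: uv=s,\ f(u)\ne0,\ g(v)\ne0\}$ (a finite set; an empty sum is $0$). An endomorphism $\sigma$ of $R$ is compatible if for all $a,b\in R$: $ab=0 \iff a\sigma(b)=0$. $R$ is $S$-compatible if $\omega_s$ is compatible for every $s\in S$. $R$ is $(S,\omega)$-Armendariz if whenever $f,g\in R[[S,\omega]]$ satisfy $fg=0$, then $f(s)\,\omega_s(g(t))=0$ for all $s,t\in S$. *)

theory Defs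
  imports "HOL-Algebra.Ring" "HOL-Algebra.AbelCoset"
begin

definition r_ann :: "('b, 'c) ring_scheme \<Rightarrow> 'b set \<Rightarrow> 'b set" where
  "r_ann R X = {a \<in> carrier R. \<forall>x\<in>X. x \<otimes>\<^bsub>R\<^esub> a = \<zero>\<^bsub>R\<^esub>}"

fun set_pow :: "('b, 'c) ring_scheme \<Rightarrow> 'b set \<Rightarrow> nat \<Rightarrow> 'b set" where
  "set_pow R X 0 = {\<one>\<^bsub>R\<^esub>}"
| "set_pow R X (Suc 0) = X"
| "set_pow R X (Suc (Suc n)) = {p \<otimes>\<^bsub>R\<^esub> x | p x. p \<in> set_pow R X (Suc n) \<and> x \<in> X}"

definition right_ideal :: "'b set \<Rightarrow> ('b, 'c) ring_scheme \<Rightarrow> bool" where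
  "right_ideal I R \<longleftrightarrow> additive_subgroup I R \<and>
     (\<forall>x\<in>I. \<forall>r\<in>carrier R. x \<otimes>\<^bsub>R\<^esub> r \<in> I)"

definition gen_right_Baer :: "('b, 'c) ring_scheme \<Rightarrow> bool" where
  "gen_right_Baer R \<longleftrightarrow>
     (\<forall>X. X \<subseteq> carrier R \<and> X \<noteq> {} \<longrightarrow>
        (\<exists>n::nat. n \<ge> 1 \<and> (\<exists>e\<in>carrier R. e \<otimes>\<^bsub>R\<^esub> e = e \<and>
            r_ann R (set_pow R X n) = {e \<otimes>\<^bsub>R\<^esub> a | a. a \<in> carrier R})))"

definition gen_right_qBaer :: "('b, 'c) ring_scheme \<Rightarrow> bool" where
  "gen_right_qBaer R \<longleftrightarrow>
     (\<forall>I. right_ideal I R \<longrightarrow>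
        (\<exists>n::nat. n \<ge> 1 \<and> (\<exists>e\<in>carrier R. e \<otimes>\<^bsub>R\<^esub> e = e \<and>
            r_ann R (set_pow R I n) = {e \<otimes>\<^bsub>R\<^esub> a | a. a \<in> carrier R})))"

definition tc_ring :: "'a::ring_1 ring" where
  "tc_ring = \<lparr>carrier = UNIV, mult = (*), one = 1, zero = 0, add = (+)\<rparr>"

definition ordered_monoid :: "('m::monoid_mult \<Rightarrow> 'm \<Rightarrow> bool) \<Rightarrow> bool" where
  "ordered_monoid leq \<longleftrightarrow> partial_order_on UNIV {(u, v). leq u v} \<and>
     (\<forall>u v t. leq u v \<longrightarrow> leq (u * t) (v * t) \<and> leq (t * u) (t * v))"

definition strictly_ordered_monoid :: "('m::monoid_mult \<Rightarrow> 'm \<Rightarrow> bool) \<Rightarrow> bool" where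
  "strictly_ordered_monoid leq \<longleftrightarrow> ordered_monoid leq \<and>
     (\<forall>u v t. leq u v \<and> u \<noteq> v \<longrightarrow>
        (leq (u * t) (v * t) \<and> u * t \<noteq> v * t) \<and> (leq (t * u) (t * v) \<and> t * u \<noteq> t * v))"

definition quasitotally_ordered :: "('m::monoid_mult \<Rightarrow> 'm \<Rightarrow> bool) \<Rightarrow> bool" where
  "quasitotally_ordered leq \<longleftrightarrow>
     (\<exists>leq'. (\<forall>u v. leq u v \<longrightarrow> leq' u v) \<and> strictly_ordered_monoid leq' \<and>
            (\<forall>u v. leq' u v \<or> leq' v u))"

definition artinian_set :: "('m \<Rightarrow> 'm \<Rightarrow> bool) \<Rightarrow> 'm set \<Rightarrow> bool" where
  "artinian_set leq X \<longleftrightarrow>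
     \<not> (\<exists>f :: nat \<Rightarrow> 'm. (\<forall>i. f i \<in> X) \<and> (\<forall>i. leq (f (Suc i)) (f i) \<and> f (Suc i) \<noteq> f i))"

definition narrow_set :: "('m \<Rightarrow> 'm \<Rightarrow> bool) \<Rightarrow> 'm set \<Rightarrow> bool" where
  "narrow_set leq X \<longleftrightarrow>
     (\<forall>Y \<subseteq> X. (\<forall>x\<in>Y. \<forall>y\<in>Y. x \<noteq> y \<longrightarrow> \<not> leq x y \<and> \<not> leq y x) \<longrightarrow> finite Y)"

definition ring_endo :: "('a::ring_1 \<Rightarrow> 'a) \<Rightarrow> bool" where
  "ring_endo \<sigma> \<longleftrightarrow> (\<forall>a b. \<sigma> (a + b) = \<sigma> a + \<sigma> b \<and> \<sigma> (a * b) = \<sigma> a * \<sigma> b)"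

definition monoid_hom_End :: "('m::monoid_mult \<Rightarrow> 'a::ring_1 \<Rightarrow> 'a) \<Rightarrow> bool" where
  "monoid_hom_End \<omega> \<longleftrightarrow> (\<forall>s. ring_endo (\<omega> s)) \<and> \<omega> 1 = id \<and>
     (\<forall>s t. \<omega> (s * t) = \<omega> s \<circ> \<omega> t)"

definition supp :: "('m \<Rightarrow> 'a::zero) \<Rightarrow> 'm set" where
  "supp f = {s. f s \<noteq> 0}"

definition skew_gps :: "('m::monoid_mult \<Rightarrow> 'm \<Rightarrow> bool) \<Rightarrow> ('m \<Rightarrow> 'a::ring_1 \<Rightarrow> 'a)
    \<Rightarrow> ('m \<Rightarrow> 'a) ring" where
  "skew_gps leq \<omega> =
     \<lparr>carrier = {f. artinian_set leq (supp f) \<and> narrow_set leq (supp f)},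
      mult = (\<lambda>f g s. \<Sum>(u, v)\<in>{(u, v). u * v = s \<and> f u \<noteq> 0 \<and> g v \<noteq> 0}. f u * \<omega> u (g v)),
      one = (\<lambda>s. if s = 1 then 1 else 0),
      zero = (\<lambda>s. 0),
      add = (\<lambda>f g s. f s + g s)\<rparr>"

definition compatible_endo :: "('a::ring_1 \<Rightarrow> 'a) \<Rightarrow> bool" where
  "compatible_endo \<sigma> \<longleftrightarrow> (\<forall>a b. a * b = 0 \<longleftrightarrow> a * \<sigma> b = 0)"

definition S_compatible :: "('m \<Rightarrow> 'a::ring_1 \<Rightarrow> 'a) \<Rightarrow> bool" where
  "S_compatible \<omega> \<longleftrightarrow> (\<forall>s. compatible_endo (\<omega> s))"

definition S_omega_Armendariz :: "('m::monoid_mult \<Rightarrow> 'm \<Rightarrow> bool) \<Rightarrow> ('m \<Rightarrow> 'a::ring_1 \<Rightarrow> 'a) \<Rightarrow> bool" where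
  "S_omega_Armendariz leq \<omega> \<longleftrightarrow>
     (\<forall>f\<in>carrier (skew_gps leq \<omega>). \<forall>g\<in>carrier (skew_gps leq \<omega>).
        f \<otimes>\<^bsub>skew_gps leq \<omega>\<^esub> g = \<zero>\<^bsub>skew_gps leq \<omega>\<^esub> \<longrightarrow> (\<forall>s t. f s * \<omega> s (g t) = 0))"

end

theory Submission
  imports Defs "HOL-Library.Ramsey"
begin

lemma om_refl: "ordered_monoid leq \<Longrightarrow> leq x x"
  unfolding ordered_monoid_def partial_order_on_def preorder_on_def refl_on_def by blast
lemma om_trans: "ordered_monoid leq \<Longrightarrow> leq x y \<Longrightarrow> leq y z \<Longrightarrow> leq x z"
  unfolding ordered_monoid_def partial_order_on_def preorder_on_def trans_def by blast
lemma om_antisym: "ordered_monoid leq \<Longrightarrow> leq x y \<Longrightarrow> leq y x \<Longrightarrow> x = y"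
  unfolding ordered_monoid_def partial_order_on_def antisym_def by blast
lemma om_mono: "ordered_monoid leq \<Longrightarrow> leq u v \<Longrightarrow> leq (u*t) (v*t) \<and> leq (t*u) (t*v)"
  unfolding ordered_monoid_def by blast

definition good :: "('m \<Rightarrow> 'm \<Rightarrow> bool) \<Rightarrow> 'm set \<Rightarrow> bool" where
  "good leq X \<longleftrightarrow> (\<forall>a::nat\<Rightarrow>'m. (\<forall>i. a i \<in> X) \<longrightarrow>
      (\<exists>h::nat\<Rightarrow>nat. strict_mono h \<and> (\<forall>i j. i < j \<longrightarrow> leq (a (h i)) (a (h j)))))"

lemma dec_chain:
  assumes om: "ordered_monoid leq" and d: "\<forall>i. leq (f (Suc i)) (f i) \<and> f (Suc i) \<noteq> f i"
  shows "i \<le> j \<Longrightarrow> leq (f j) (f i)"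
proof (induction j)
  case 0 then show ?case using om_refl[OF om] by simp
next
  case (Suc j)
  show ?case
  proof (cases "i = Suc j")
    case True then show ?thesis using om_refl[OF om] by simp
  next
    case False then have "i \<le> j" using Suc by simp
    then show ?thesis using Suc(1) d om_trans[OF om] by metis
  qed
qed

lemma an_of_good:
  assumes om: "ordered_monoid leq" and g: "good leq X"
  shows "artinian_set leq X \<and> narrow_set leq X"
proof
  show "artinian_set leq X"
    unfolding artinian_set_def
  proof
    assume "\<exists>f. (\<forall>i. f i \<in> X) \<and> (\<forall>i. leq (f (Suc i)) (f i) \<and> f (Suc i) \<noteq> f i)"
    then obtain f where fX: "\<forall>i. f i \<in> X" and d: "\<forall>i. leq (f (Suc i)) (f i) \<and> f (Suc i) \<noteq> f i" by blast
    obtain h :: "nat \<Rightarrow> nat" where h: "strict_mono h" and hl: "\<forall>i j. i < j \<longrightarrow> leq (f (h i)) (f (h j))"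
      using g fX unfolding good_def by blast
    have lt: "h 0 < h 1" using h by (simp add: strict_mono_def)
    have "leq (f (h 0)) (f (h 1))" using hl by simp
    moreover have "leq (f (h 1)) (f (Suc (h 0)))" using dec_chain[OF om d] lt by simp
    moreover have "leq (f (Suc (h 0))) (f (h 0))" using d by simp
    ultimately have "leq (f (h 0)) (f (Suc (h 0)))"
      using om_trans[OF om] by metis
    then have "f (h 0) = f (Suc (h 0))" using om_antisym[OF om] d by metis
    then show False using d by metis
  qed
  show "narrow_set leq X"
    unfolding narrow_set_def
  proof (intro allI impI)
    fix Y assume Y: "Y \<subseteq> X" and ac: "\<forall>x\<in>Y. \<forall>y\<in>Y. x \<noteq> y \<longrightarrow> \<not> leq x y \<and> \<not> leq y x"
    show "finite Y"
    proof (rule ccontr)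
      assume "infinite Y"
      then obtain f :: "nat \<Rightarrow> _" where f: "inj f" "range f \<subseteq> Y" using infinite_countable_subset by blast
      obtain h :: "nat \<Rightarrow> nat" where h: "strict_mono h" and hl: "\<forall>i j. i < j \<longrightarrow> leq (f (h i)) (f (h j))"
        using g f Y unfolding good_def by blast
      have "h 0 < h 1" using h strict_monoD by blast
      then have "h 0 \<noteq> h 1" by simp
      then have "f (h 0) \<noteq> f (h 1)" using f(1) by (simp add: inj_eq)
      moreover have "leq (f (h 0)) (f (h 1))" using hl by simp
      ultimately show False using ac f(2) by blast
    qed
  qed
qed

lemma good_of_an:
  assumes om: "ordered_monoid leq" and ar: "artinian_set leq X" and na: "narrow_set leq X"
  shows "good leq X"
  unfolding good_def
proof (intro allI impI)
  fix a :: "nat \<Rightarrow> _" assume aX: "\<forall>i. a i \<in> X"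
  define col where "col i j = (if leq (a i) (a j) then 0 else if leq (a j) (a i) then 1 else (2::nat))" for i j
  define F where "F S = col (Min S) (Max S)" for S :: "nat set"
  have c3: "F S < 3" for S unfolding F_def col_def by simp
  have "\<forall>x\<in>(UNIV::nat set). \<forall>y\<in>UNIV. x \<noteq> y \<longrightarrow> F {x, y} < 3" using c3 by blast
  from Ramsey2[OF infinite_UNIV_nat this] obtain Y t where Y: "Y \<subseteq> UNIV" "infinite Y" "t < (3::nat)"
      and Yt: "\<forall>x\<in>Y. \<forall>y\<in>Y. x\<noteq>y \<longrightarrow> F {x, y} = t"
    by blast
  define h where "h = enumerate Y"
  have hs: "strict_mono h" unfolding h_def using Y(2) by (simp add: strict_mono_def)
  have hY: "h i \<in> Y" for i unfolding h_def using Y(2) by (simp add: enumerate_in_set)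
  have colt: "i < j \<Longrightarrow> col (h i) (h j) = t" for i j
  proof -
    assume "i < j"
    then have lt: "h i < h j" using hs by (simp add: strict_mono_def)
    then have "F {h i, h j} = t" using Yt hY by auto
    moreover have "Min {h i, h j} = h i" "Max {h i, h j} = h j" using lt by auto
    ultimately show ?thesis by (simp add: F_def)
  qed
  consider "t = 0" | "t = 1" | "t = 2" using Y(3) by linarith
  then show "\<exists>h::nat\<Rightarrow>nat. strict_mono h \<and> (\<forall>i j. i < j \<longrightarrow> leq (a (h i)) (a (h j)))"
  proof cases
    case 1
    have "\<forall>i j. i < j \<longrightarrow> leq (a (h i)) (a (h j))"
    proof (intro allI impI)
      fix i j :: nat assume "i < j"
      then have "col (h i) (h j) = 0" using colt 1 by simp
      then show "leq (a (h i)) (a (h j))" by (simp add: col_def split: if_splits)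
    qed
    then show ?thesis using hs by blast
  next
    case 2
    have "\<forall>i. leq (a (h (Suc i))) (a (h i)) \<and> a (h (Suc i)) \<noteq> a (h i)"
    proof
      fix i
      have "col (h i) (h (Suc i)) = 1" using colt 2 by simp
      then show "leq (a (h (Suc i))) (a (h i)) \<and> a (h (Suc i)) \<noteq> a (h i)"
        using om_refl[OF om, of "a (h i)"] by (auto simp: col_def split: if_splits)
    qed
    moreover have "\<forall>i. (a \<circ> h) i \<in> X" using aX by simp
    ultimately have "\<exists>f. (\<forall>i. f i \<in> X) \<and> (\<forall>i. leq (f (Suc i)) (f i) \<and> f (Suc i) \<noteq> f i)"
      by (intro exI[of _ "a \<circ> h"]) simp
    then show ?thesis using ar unfolding artinian_set_def by blast
  next
    case 3
    have inc: "i < j \<Longrightarrow> \<not> leq (a (h i)) (a (h j)) \<and> \<not> leq (a (h j)) (a (h i))" for i j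
      using colt[of i j] 3 by (auto simp: col_def split: if_splits)
    have ne: "i \<noteq> j \<Longrightarrow> a (h i) \<noteq> a (h j)" for i j
      using inc[of i j] inc[of j i] om_refl[OF om] by (cases "i < j") auto
    have "inj (a \<circ> h)" by (rule injI) (use ne in auto)
    then have inf: "infinite (range (a \<circ> h))" by (rule range_inj_infinite)
    have "range (a \<circ> h) \<subseteq> X" using aX by auto
    moreover have "\<forall>x\<in>range (a \<circ> h). \<forall>y\<in>range (a \<circ> h). x \<noteq> y \<longrightarrow> \<not> leq x y \<and> \<not> leq y x"
    proof (clarsimp)
      fix i j assume "a (h i) \<noteq> a (h j)"
      then have "i \<noteq> j" by auto
      then show "\<not> leq (a (h i)) (a (h j)) \<and> \<not> leq (a (h j)) (a (h i))"
        using inc[of i j] inc[of j i] by (cases "i < j") auto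
    qed
    ultimately have "finite (range (a \<circ> h))" using na unfolding narrow_set_def by blast
    then show ?thesis using inf by blast
  qed
qed

lemma good_subset: "good leq X \<Longrightarrow> Y \<subseteq> X \<Longrightarrow> good leq Y"
  unfolding good_def by blast

lemma good_singleton: "ordered_monoid leq \<Longrightarrow> good leq {x}"
  unfolding good_def
proof (intro allI impI)
  fix a :: "nat \<Rightarrow> _" assume om: "ordered_monoid leq" and "\<forall>i. a i \<in> {x}"
  then have "a i = x" for i by simp
  then have "\<forall>i j. i < j \<longrightarrow> leq (a (id i)) (a (id j))" using om_refl[OF om] by simp
  moreover have "strict_mono (id :: nat \<Rightarrow> nat)" by (simp add: strict_mono_def)
  ultimately show "\<exists>h::nat\<Rightarrow>nat. strict_mono h \<and> (\<forall>i j. i < j \<longrightarrow> leq (a (h i)) (a (h j)))" by blast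
qed

lemma good_sub_enum:
  assumes g: "good leq X" and S: "infinite S" and aS: "\<forall>i\<in>S. a i \<in> X"
  shows "\<exists>h::nat\<Rightarrow>nat. strict_mono h \<and> (\<forall>i j. i < j \<longrightarrow> leq (a (h i)) (a (h j)))"
proof -
  define e where "e = enumerate S"
  have es: "strict_mono e" unfolding e_def using S by (simp add: strict_mono_def)
  have eS: "e i \<in> S" for i unfolding e_def using S by (simp add: enumerate_in_set)
  have "\<forall>i. (a \<circ> e) i \<in> X" using aS eS by simp
  then obtain h :: "nat \<Rightarrow> nat" where h: "strict_mono h" and hl: "\<forall>i j. i < j \<longrightarrow> leq ((a \<circ> e) (h i)) ((a \<circ> e) (h j))"
    using g unfolding good_def by blast
  have "strict_mono (e \<circ> h)" using es h by (simp add: strict_mono_def)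
  moreover have "\<forall>i j. i < j \<longrightarrow> leq (a ((e \<circ> h) i)) (a ((e \<circ> h) j))" using hl by simp
  ultimately show ?thesis by blast
qed

lemma good_Un:
  assumes gX: "good leq X" and gY: "good leq Y"
  shows "good leq (X \<union> Y)"
  unfolding good_def
proof (intro allI impI)
  fix a :: "nat \<Rightarrow> _" assume a: "\<forall>i. a i \<in> X \<union> Y"
  have "{i. a i \<in> X} \<union> {i. a i \<in> Y} = UNIV" using a by blast
  then have "infinite {i. a i \<in> X} \<or> infinite {i. a i \<in> Y}"
    by (metis finite_UnI infinite_UNIV_nat)
  then show "\<exists>h::nat\<Rightarrow>nat. strict_mono h \<and> (\<forall>i j. i < j \<longrightarrow> leq (a (h i)) (a (h j)))"
  proof
    assume "infinite {i. a i \<in> X}"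
    then show ?thesis using good_sub_enum[OF gX, of "{i. a i \<in> X}" a] by blast
  next
    assume "infinite {i. a i \<in> Y}"
    then show ?thesis using good_sub_enum[OF gY, of "{i. a i \<in> Y}" a] by blast
  qed
qed

lemma strict_mono_less: "strict_mono (h::nat\<Rightarrow>nat) \<Longrightarrow> i < j \<Longrightarrow> h i < h j"
  by (simp add: strict_mono_def)

lemma good_times:
  assumes om: "ordered_monoid leq" and gX: "good leq X" and gY: "good leq Y"
  shows "good leq {x * y | x y. x \<in> X \<and> y \<in> Y}"
  unfolding good_def
proof (intro allI impI)
  fix a :: "nat \<Rightarrow> _" assume a: "\<forall>i. a i \<in> {x * y | x y. x \<in> X \<and> y \<in> Y}"
  have "\<forall>i. \<exists>p. fst p \<in> X \<and> snd p \<in> Y \<and> a i = fst p * snd p" using a by force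
  from choice[OF this] obtain p where p0: "\<forall>i. fst (p i) \<in> X \<and> snd (p i) \<in> Y \<and> a i = fst (p i) * snd (p i)"
    by blast
  then have p: "\<And>i. fst (p i) \<in> X \<and> snd (p i) \<in> Y \<and> a i = fst (p i) * snd (p i)" by blast
  have "\<forall>i. (fst \<circ> p) i \<in> X" using p by simp
  then obtain h1 :: "nat \<Rightarrow> nat" where h1: "strict_mono h1" and l1: "\<forall>i j. i < j \<longrightarrow> leq ((fst \<circ> p) (h1 i)) ((fst \<circ> p) (h1 j))"
    using gX unfolding good_def by blast
  have "\<forall>i. (snd \<circ> p \<circ> h1) i \<in> Y" using p by simp
  then obtain h2 :: "nat \<Rightarrow> nat" where h2: "strict_mono h2" and l2: "\<forall>i j. i < j \<longrightarrow> leq ((snd \<circ> p \<circ> h1) (h2 i)) ((snd \<circ> p \<circ> h1) (h2 j))"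
    using gY unfolding good_def by blast
  have "strict_mono (h1 \<circ> h2)" using h1 h2 by (simp add: strict_mono_def)
  moreover have "\<forall>i j. i < j \<longrightarrow> leq (a ((h1 \<circ> h2) i)) (a ((h1 \<circ> h2) j))"
  proof (intro allI impI)
    fix i j :: nat assume ij: "i < j"
    define u where "u = fst (p (h1 (h2 i)))"
    define u' where "u' = fst (p (h1 (h2 j)))"
    define v where "v = snd (p (h1 (h2 i)))"
    define v' where "v' = snd (p (h1 (h2 j)))"
    have "h2 i < h2 j" using strict_mono_less[OF h2 ij] .
    then have uu: "leq u u'" using l1 unfolding u_def u'_def by simp
    have vv: "leq v v'" using l2 ij unfolding v_def v'_def by simp
    have "leq (u * v) (u' * v)" using om_mono[OF om uu] by blast
    moreover have "leq (u' * v) (u' * v')" using om_mono[OF om vv] by blast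
    ultimately have "leq (u * v) (u' * v')" by (rule om_trans[OF om])
    then show "leq (a ((h1 \<circ> h2) i)) (a ((h1 \<circ> h2) j))"
      using p unfolding u_def u'_def v_def v'_def by simp
  qed
  ultimately show "\<exists>h::nat\<Rightarrow>nat. strict_mono h \<and> (\<forall>i j. i < j \<longrightarrow> leq (a (h i)) (a (h j)))" by blast
qed

lemma som_om: "strictly_ordered_monoid leq \<Longrightarrow> ordered_monoid leq"
  unfolding strictly_ordered_monoid_def by blast

lemma som_strict: "strictly_ordered_monoid leq \<Longrightarrow> leq u v \<Longrightarrow> u \<noteq> v \<Longrightarrow>
   (leq (u * t) (v * t) \<and> u * t \<noteq> v * t) \<and> (leq (t * u) (t * v) \<and> t * u \<noteq> t * v)"
  unfolding strictly_ordered_monoid_def by blast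

lemma finite_fact:
  assumes som: "strictly_ordered_monoid leq" and gX: "good leq X" and gY: "good leq Y"
  shows "finite {(u, v). u * v = s \<and> u \<in> X \<and> v \<in> Y}"
proof (rule ccontr)
  have om: "ordered_monoid leq" using som by (rule som_om)
  assume "infinite {(u, v). u * v = s \<and> u \<in> X \<and> v \<in> Y}"
  then obtain p :: "nat \<Rightarrow> _" where p: "inj p" "range p \<subseteq> {(u, v). u * v = s \<and> u \<in> X \<and> v \<in> Y}"
    using infinite_countable_subset by blast
  have pp: "fst (p i) * snd (p i) = s \<and> fst (p i) \<in> X \<and> snd (p i) \<in> Y" for i
  proof -
    have "p i \<in> {(u, v). u * v = s \<and> u \<in> X \<and> v \<in> Y}" using p(2) by (rule subsetD[OF _ rangeI])
    then show ?thesis by (simp add: split_beta)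
  qed
  have "\<forall>i. (fst \<circ> p) i \<in> X" using pp by simp
  then obtain h1 :: "nat \<Rightarrow> nat" where h1: "strict_mono h1" and l1: "\<forall>i j. i < j \<longrightarrow> leq ((fst \<circ> p) (h1 i)) ((fst \<circ> p) (h1 j))"
    using gX unfolding good_def by blast
  have "\<forall>i. (snd \<circ> p \<circ> h1) i \<in> Y" using pp by simp
  then obtain h2 :: "nat \<Rightarrow> nat" where h2: "strict_mono h2" and l2: "\<forall>i j. i < j \<longrightarrow> leq ((snd \<circ> p \<circ> h1) (h2 i)) ((snd \<circ> p \<circ> h1) (h2 j))"
    using gY unfolding good_def by blast
  define i where "i = h1 (h2 0)"
  define j where "j = h1 (h2 1)"
  have "h2 0 < h2 1" using strict_mono_less[OF h2, of 0 1] by simp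
  then have "i < j" using strict_mono_less[OF h1] unfolding i_def j_def by blast
  then have "i \<noteq> j" by simp
  then have "p i \<noteq> p j" using p(1) by (simp add: inj_eq)
  define u where "u = fst (p i)"
  define u' where "u' = fst (p j)"
  define v where "v = snd (p i)"
  define v' where "v' = snd (p j)"
  have uu: "leq u u'" using l1 \<open>h2 0 < h2 1\<close> unfolding u_def u'_def i_def j_def by simp
  have vv: "leq v v'" using l2 unfolding v_def v'_def i_def j_def by simp
  have ne: "u \<noteq> u' \<or> v \<noteq> v'" using \<open>p i \<noteq> p j\<close> unfolding u_def u'_def v_def v'_def
    by (simp add: prod_eq_iff)
  have eq: "u * v = u' * v'" using pp unfolding u_def u'_def v_def v'_def by simp
  have A: "leq (u * v) (u' * v)" using om_mono[OF om uu] by blast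
  have B: "leq (u' * v) (u' * v')" using om_mono[OF om vv] by blast
  from ne show False
  proof
    assume "u \<noteq> u'"
    then have C: "u * v \<noteq> u' * v" using som_strict[OF som uu] by blast
    have "leq (u' * v) (u * v)" using B eq by simp
    then show False using A C om_antisym[OF om] by blast
  next
    assume "v \<noteq> v'"
    then have C: "u' * v \<noteq> u' * v'" using som_strict[OF som vv] by blast
    have "leq (u' * v') (u' * v)" using A eq by simp
    then show False using B C om_antisym[OF om] by blast
  qed
qed

definition cst :: "'a::ring_1 \<Rightarrow> 'm::monoid_mult \<Rightarrow> 'a" where
  "cst a = (\<lambda>s. if s = 1 then a else 0)"

lemma carrier_A: "ordered_monoid leq \<Longrightarrow> f \<in> carrier (skew_gps leq \<omega>) \<longleftrightarrow> good leq (supp f)"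
  unfolding skew_gps_def using an_of_good good_of_an by auto

lemma mult_A: "f \<otimes>\<^bsub>skew_gps leq \<omega>\<^esub> g = (\<lambda>s. \<Sum>(u, v)\<in>{(u, v). u * v = s \<and> f u \<noteq> 0 \<and> g v \<noteq> 0}. f u * \<omega> u (g v))"
  unfolding skew_gps_def by simp

lemma zero_A: "\<zero>\<^bsub>skew_gps leq \<omega>\<^esub> = (\<lambda>s. 0)"
  unfolding skew_gps_def by simp

lemma add_A: "f \<oplus>\<^bsub>skew_gps leq \<omega>\<^esub> g = (\<lambda>s. f s + g s)"
  unfolding skew_gps_def by simp

lemma hom_id: "monoid_hom_End \<omega> \<Longrightarrow> \<omega> 1 x = x"
  unfolding monoid_hom_End_def by simp

lemma hom_mult: "monoid_hom_End \<omega> \<Longrightarrow> \<omega> s (x * y) = \<omega> s x * \<omega> s y"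
  unfolding monoid_hom_End_def ring_endo_def by blast

lemma hom_add: "monoid_hom_End \<omega> \<Longrightarrow> \<omega> s (x + y) = \<omega> s x + \<omega> s y"
  unfolding monoid_hom_End_def ring_endo_def by blast

lemma hom_zero: "monoid_hom_End \<omega> \<Longrightarrow> \<omega> s 0 = 0"
  using hom_add[of \<omega> s 0 0] by simp

lemma cst_carrier: "ordered_monoid leq \<Longrightarrow> cst a \<in> carrier (skew_gps leq \<omega>)"
proof -
  assume om: "ordered_monoid leq"
  have "supp (cst a) \<subseteq> {1}" unfolding supp_def cst_def by auto
  then have "good leq (supp (cst a))" using good_subset good_singleton[OF om] by blast
  then show ?thesis using carrier_A[OF om] by blast
qed

lemma cst_mult:
  assumes hom: "monoid_hom_End \<omega>"
  shows "cst a \<otimes>\<^bsub>skew_gps leq \<omega>\<^esub> g = (\<lambda>s. a * g s)"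
proof
  fix s
  have T: "{(u, v). u * v = s \<and> cst a u \<noteq> 0 \<and> g v \<noteq> 0} = (if a \<noteq> 0 \<and> g s \<noteq> 0 then {(1, s)} else {})"
    unfolding cst_def by (auto split: if_splits)
  show "(cst a \<otimes>\<^bsub>skew_gps leq \<omega>\<^esub> g) s = a * g s"
    unfolding mult_A T by (auto simp: cst_def hom_id[OF hom])
qed

lemma mult_cst:
  assumes hom: "monoid_hom_End \<omega>"
  shows "f \<otimes>\<^bsub>skew_gps leq \<omega>\<^esub> cst b = (\<lambda>s. f s * \<omega> s b)"
proof
  fix s
  have T: "{(u, v). u * v = s \<and> f u \<noteq> 0 \<and> cst b v \<noteq> 0} = (if f s \<noteq> 0 \<and> b \<noteq> 0 then {(s, 1)} else {})"
    unfolding cst_def by auto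
  show "(f \<otimes>\<^bsub>skew_gps leq \<omega>\<^esub> cst b) s = f s * \<omega> s b"
    unfolding mult_A T by (auto simp: cst_def hom_zero[OF hom])
qed

lemma cst_cst: "monoid_hom_End \<omega> \<Longrightarrow> cst a \<otimes>\<^bsub>skew_gps leq \<omega>\<^esub> cst b = cst (a * b)"
  by (simp add: cst_mult) (auto simp: cst_def)

lemma mult_carrier:
  assumes som: "strictly_ordered_monoid leq"
    and f: "f \<in> carrier (skew_gps leq \<omega>)" and g: "g \<in> carrier (skew_gps leq \<omega>)"
  shows "f \<otimes>\<^bsub>skew_gps leq \<omega>\<^esub> g \<in> carrier (skew_gps leq \<omega>)"
proof -
  have om: "ordered_monoid leq" using som by (rule som_om)
  have gf: "good leq (supp f)" and gg: "good leq (supp g)" using f g carrier_A[OF om] by auto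
  have "supp (f \<otimes>\<^bsub>skew_gps leq \<omega>\<^esub> g) \<subseteq> {x * y | x y. x \<in> supp f \<and> y \<in> supp g}"
  proof
    fix s assume s: "s \<in> supp (f \<otimes>\<^bsub>skew_gps leq \<omega>\<^esub> g)"
    show "s \<in> {x * y | x y. x \<in> supp f \<and> y \<in> supp g}"
    proof (rule ccontr)
      assume ns: "s \<notin> {x * y | x y. x \<in> supp f \<and> y \<in> supp g}"
      have E: "{(u, v). u * v = s \<and> f u \<noteq> 0 \<and> g v \<noteq> 0} = {}"
        using ns unfolding supp_def by fastforce
      have "(f \<otimes>\<^bsub>skew_gps leq \<omega>\<^esub> g) s = 0" unfolding mult_A E by simp
      then show False using s unfolding supp_def by simp
    qed
  qed
  then have "good leq (supp (f \<otimes>\<^bsub>skew_gps leq \<omega>\<^esub> g))"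
    using good_subset good_times[OF om gf gg] by blast
  then show ?thesis using carrier_A[OF om] by blast
qed

lemma idem_left:
  assumes som: "strictly_ordered_monoid leq" and hom: "monoid_hom_End \<omega>"
    and arm: "S_omega_Armendariz leq \<omega>"
    and E: "E \<in> carrier (skew_gps leq \<omega>)" and EE: "E \<otimes>\<^bsub>skew_gps leq \<omega>\<^esub> E = E"
  shows "E 1 * E v = E v"
proof -
  have om: "ordered_monoid leq" using som by (rule som_om)
  define F where "F = (\<lambda>s. E s - (if s = 1 then 1 else 0))"
  have gE: "good leq (supp E)" using E carrier_A[OF om] by blast
  have gE1: "good leq (supp E \<union> {1})" using good_Un[OF gE good_singleton[OF om]] .
  have "supp F \<subseteq> supp E \<union> {1}" unfolding supp_def F_def by auto
  then have "good leq (supp F)" using good_subset[OF gE1] by blast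
  then have Fc: "F \<in> carrier (skew_gps leq \<omega>)" using carrier_A[OF om] by blast
  have FE: "F \<otimes>\<^bsub>skew_gps leq \<omega>\<^esub> E = \<zero>\<^bsub>skew_gps leq \<omega>\<^esub>"
  proof -
    have "(F \<otimes>\<^bsub>skew_gps leq \<omega>\<^esub> E) s = 0" for s
    proof -
      define T where "T = {(u, v). u * v = s \<and> u \<in> supp E \<union> {1} \<and> v \<in> supp E}"
      have fT: "finite T" unfolding T_def by (rule finite_fact[OF som gE1 gE])
      define TF where "TF = {(u, v). u * v = s \<and> F u \<noteq> 0 \<and> E v \<noteq> 0}"
      define TE where "TE = {(u, v). u * v = s \<and> E u \<noteq> 0 \<and> E v \<noteq> 0}"
      have TFT: "TF \<subseteq> T" unfolding TF_def T_def supp_def F_def by (auto split: if_splits)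
      have TET: "TE \<subseteq> T" unfolding TE_def T_def supp_def by auto
      have s1: "(\<Sum>(u, v)\<in>TF. F u * \<omega> u (E v)) = (\<Sum>(u, v)\<in>T. F u * \<omega> u (E v))"
        by (rule sum.mono_neutral_left[OF fT TFT]) (auto simp: TF_def T_def supp_def)
      have s2: "(\<Sum>(u, v)\<in>TE. E u * \<omega> u (E v)) = (\<Sum>(u, v)\<in>T. E u * \<omega> u (E v))"
        by (rule sum.mono_neutral_left[OF fT TET]) (auto simp: TE_def T_def supp_def)
      have Es: "E s = (\<Sum>(u, v)\<in>TE. E u * \<omega> u (E v))"
        using fun_cong[OF EE, of s] unfolding mult_A TE_def by simp
      have pw: "(case x of (u, v) \<Rightarrow> F u * \<omega> u (E v)) =
          (case x of (u, v) \<Rightarrow> E u * \<omega> u (E v)) - (if x = (1, s) then E s else 0)" if "x \<in> T" for x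
      proof -
        obtain u v where x: "x = (u, v)" by (cases x)
        have uv: "u * v = s" using that x unfolding T_def by simp
        show ?thesis
        proof (cases "u = 1")
          case True
          then have "v = s" using uv by simp
          then show ?thesis using True x by (simp add: F_def hom_id[OF hom] algebra_simps)
        next
          case False
          then show ?thesis using x by (simp add: F_def)
        qed
      qed
      have "(\<Sum>(u, v)\<in>T. F u * \<omega> u (E v)) =
          (\<Sum>x\<in>T. (case x of (u, v) \<Rightarrow> E u * \<omega> u (E v)) - (if x = (1, s) then E s else 0))"
        using pw by (rule sum.cong[OF refl])
      also have "\<dots> = (\<Sum>(u, v)\<in>T. E u * \<omega> u (E v)) - (\<Sum>x\<in>T. if x = (1, s) then E s else 0)"
        by (rule sum_subtractf)
      also have "(\<Sum>x\<in>T. if x = (1, s) then E s else 0) = E s"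
        using fT by (simp add: T_def supp_def)
      finally have "(\<Sum>(u, v)\<in>T. F u * \<omega> u (E v)) = 0" using s2 Es by simp
      then show ?thesis using s1 unfolding mult_A TF_def by simp
    qed
    then show ?thesis unfolding zero_A by (rule ext)
  qed
  have "F 1 * \<omega> 1 (E v) = 0" using arm Fc E FE unfolding S_omega_Armendariz_def by blast
  then show ?thesis by (simp add: F_def hom_id[OF hom] algebra_simps)
qed

lemma idem_prod:
  assumes som: "strictly_ordered_monoid leq" and hom: "monoid_hom_End \<omega>"
    and arm: "S_omega_Armendariz leq \<omega>"
    and E: "E \<in> carrier (skew_gps leq \<omega>)" and EE: "E \<otimes>\<^bsub>skew_gps leq \<omega>\<^esub> E = E"
  shows "E 1 * (E \<otimes>\<^bsub>skew_gps leq \<omega>\<^esub> h) s = (E \<otimes>\<^bsub>skew_gps leq \<omega>\<^esub> h) s"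
proof -
  have "E 1 * (E \<otimes>\<^bsub>skew_gps leq \<omega>\<^esub> h) s =
      (\<Sum>x\<in>{(u, v). u * v = s \<and> E u \<noteq> 0 \<and> h v \<noteq> 0}. E 1 * (case x of (u, v) \<Rightarrow> E u * \<omega> u (h v)))"
    unfolding mult_A by (simp add: sum_distrib_left)
  also have "\<dots> = (\<Sum>x\<in>{(u, v). u * v = s \<and> E u \<noteq> 0 \<and> h v \<noteq> 0}. (case x of (u, v) \<Rightarrow> E u * \<omega> u (h v)))"
  proof (rule sum.cong[OF refl])
    fix x :: "'a \<times> 'a" show "E 1 * (case x of (u, v) \<Rightarrow> E u * \<omega> u (h v)) = (case x of (u, v) \<Rightarrow> E u * \<omega> u (h v))"
      using idem_left[OF som hom arm E EE] by (cases x) (simp add: mult.assoc[symmetric])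
  qed
  finally show ?thesis unfolding mult_A by simp
qed

lemma tc_simps[simp]: "carrier tc_ring = UNIV" "x \<otimes>\<^bsub>tc_ring\<^esub> y = x * y" "\<zero>\<^bsub>tc_ring\<^esub> = 0"
  "\<one>\<^bsub>tc_ring\<^esub> = 1" "x \<oplus>\<^bsub>tc_ring\<^esub> y = x + y"
  unfolding tc_ring_def by simp_all

lemma r_ann_tc: "r_ann (tc_ring::'a::ring_1 ring) P = {a. \<forall>x\<in>P. x * a = 0}"
  unfolding r_ann_def by simp

lemma sp_tc_A:
  assumes hom: "monoid_hom_End \<omega>" and Z: "\<forall>a\<in>Z. cst a \<in> Z'"
  shows "p \<in> set_pow (tc_ring::'a::ring_1 ring) Z (Suc n) \<Longrightarrow> cst p \<in> set_pow (skew_gps leq \<omega>) Z' (Suc n)"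
proof (induction n arbitrary: p)
  case 0 then show ?case using Z by simp
next
  case (Suc n)
  then obtain q x where q: "q \<in> set_pow tc_ring Z (Suc n)" and x: "x \<in> Z" and p: "p = q * x" by auto
  have "cst q \<in> set_pow (skew_gps leq \<omega>) Z' (Suc n)" using Suc.IH q by blast
  moreover have "cst x \<in> Z'" using Z x by blast
  moreover have "cst p = cst q \<otimes>\<^bsub>skew_gps leq \<omega>\<^esub> cst x" using cst_cst[OF hom] p by simp
  ultimately show ?case by auto
qed

lemma sp_A_tc:
  assumes hom: "monoid_hom_End \<omega>"
  shows "F \<in> set_pow (skew_gps leq \<omega>) (cst ` X) (Suc n) \<Longrightarrow> \<exists>p \<in> set_pow (tc_ring::'a::ring_1 ring) X (Suc n). F = cst p"
proof (induction n arbitrary: F)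
  case 0 then show ?case by auto
next
  case (Suc n)
  then obtain G H where G: "G \<in> set_pow (skew_gps leq \<omega>) (cst ` X) (Suc n)" and H: "H \<in> cst ` X"
    and F: "F = G \<otimes>\<^bsub>skew_gps leq \<omega>\<^esub> H" by auto
  obtain q where q: "q \<in> set_pow (tc_ring::'a::ring_1 ring) X (Suc n)" "G = cst q" using Suc.IH G by blast
  obtain x where x: "x \<in> X" "H = cst x" using H by blast
  have "F = cst (q * x)" using F q x cst_cst[OF hom] by simp
  moreover have "q * x \<in> set_pow (tc_ring::'a::ring_1 ring) X (Suc (Suc n))" using q x by auto
  ultimately show ?case by blast
qed

lemma transfer:
  fixes leq :: "'m::monoid_mult \<Rightarrow> 'm \<Rightarrow> bool" and \<omega> :: "'m \<Rightarrow> 'a::ring_1 \<Rightarrow> 'a"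
  assumes som: "strictly_ordered_monoid leq" and hom: "monoid_hom_End \<omega>"
    and arm: "S_omega_Armendariz leq \<omega>"
    and E: "E \<in> carrier (skew_gps leq \<omega>)" and EE: "E \<otimes>\<^bsub>skew_gps leq \<omega>\<^esub> E = E"
    and ann: "r_ann (skew_gps leq \<omega>) Y = {E \<otimes>\<^bsub>skew_gps leq \<omega>\<^esub> a | a. a \<in> carrier (skew_gps leq \<omega>)}"
    and P1: "\<forall>p\<in>P. cst p \<in> Y"
    and P2: "\<forall>b. (\<forall>p\<in>P. p * b = 0) \<longrightarrow> cst b \<in> r_ann (skew_gps leq \<omega>) Y"
  shows "\<exists>e\<in>carrier (tc_ring::'a ring). e \<otimes>\<^bsub>tc_ring\<^esub> e = e \<and>
            r_ann tc_ring P = {e \<otimes>\<^bsub>tc_ring\<^esub> a | a. a \<in> carrier tc_ring}"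
proof -
  define e where "e = E 1"
  have Q: "e * b = b" if b: "\<forall>p\<in>P. p * b = 0" for b
  proof -
    have "cst b \<in> r_ann (skew_gps leq \<omega>) Y" using P2 b by blast
    then obtain a where a: "a \<in> carrier (skew_gps leq \<omega>)" and ba: "cst b = E \<otimes>\<^bsub>skew_gps leq \<omega>\<^esub> a"
      using ann by blast
    have b1: "b = (E \<otimes>\<^bsub>skew_gps leq \<omega>\<^esub> a) 1" using fun_cong[OF ba, of 1] by (simp add: cst_def)
    have "e * (E \<otimes>\<^bsub>skew_gps leq \<omega>\<^esub> a) 1 = (E \<otimes>\<^bsub>skew_gps leq \<omega>\<^esub> a) 1"
      unfolding e_def by (rule idem_prod[OF som hom arm E EE])
    then show ?thesis using b1 by simp
  qed
  have Er: "E \<in> r_ann (skew_gps leq \<omega>) Y" using ann E EE by force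
  have pe: "p * e = 0" if p: "p \<in> P" for p
  proof -
    have "cst p \<in> Y" using P1 p by blast
    then have "cst p \<otimes>\<^bsub>skew_gps leq \<omega>\<^esub> E = \<zero>\<^bsub>skew_gps leq \<omega>\<^esub>" using Er unfolding r_ann_def by blast
    then have "(\<lambda>s. p * E s) = (\<lambda>s. 0)" unfolding cst_mult[OF hom] zero_A .
    then show ?thesis unfolding e_def by metis
  qed
  have "r_ann tc_ring P = {e * a | a. a \<in> UNIV}"
  proof
    show "r_ann tc_ring P \<subseteq> {e * a | a. a \<in> UNIV}"
    proof
      fix b assume "b \<in> r_ann tc_ring P"
      then have "\<forall>p\<in>P. p * b = 0" unfolding r_ann_tc by blast
      then have "b = e * b" using Q by simp
      then show "b \<in> {e * a | a. a \<in> UNIV}" by blast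
    qed
    show "{e * a | a. a \<in> UNIV} \<subseteq> r_ann tc_ring P"
    proof
      fix b assume "b \<in> {e * a | a. a \<in> UNIV}"
      then obtain a where b: "b = e * a" by blast
      have "\<forall>p\<in>P. p * b = 0" using pe unfolding b by (simp add: mult.assoc[symmetric])
      then show "b \<in> r_ann tc_ring P" unfolding r_ann_tc by blast
    qed
  qed
  moreover have "e * e = e" using Q pe by blast
  ultimately show ?thesis by auto
qed

lemma part1:
  fixes leq :: "'m::monoid_mult \<Rightarrow> 'm \<Rightarrow> bool" and \<omega> :: "'m \<Rightarrow> 'a::ring_1 \<Rightarrow> 'a"
  assumes som: "strictly_ordered_monoid leq" and hom: "monoid_hom_End \<omega>"
    and arm: "S_omega_Armendariz leq \<omega>"
    and B: "gen_right_Baer (skew_gps leq \<omega>)"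
  shows "gen_right_Baer (tc_ring :: 'a ring)"
  unfolding gen_right_Baer_def
proof (intro allI impI)
  fix X :: "'a set" assume "X \<subseteq> carrier tc_ring \<and> X \<noteq> {}"
  then have Xne: "X \<noteq> {}" by blast
  have om: "ordered_monoid leq" using som by (rule som_om)
  have "cst ` X \<subseteq> carrier (skew_gps leq \<omega>) \<and> cst ` X \<noteq> {}" using Xne cst_carrier[OF om] by blast
  from B[unfolded gen_right_Baer_def, rule_format, OF this]
  obtain n where n: "n \<ge> 1" and ex: "\<exists>e\<in>carrier (skew_gps leq \<omega>). e \<otimes>\<^bsub>skew_gps leq \<omega>\<^esub> e = e \<and>
     r_ann (skew_gps leq \<omega>) (set_pow (skew_gps leq \<omega>) (cst ` X) n) = {e \<otimes>\<^bsub>skew_gps leq \<omega>\<^esub> a | a. a \<in> carrier (skew_gps leq \<omega>)}"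
    by (elim exE conjE) (rule that)
  from ex obtain E where E: "E \<in> carrier (skew_gps leq \<omega>)" and EE: "E \<otimes>\<^bsub>skew_gps leq \<omega>\<^esub> E = E"
    and ann: "r_ann (skew_gps leq \<omega>) (set_pow (skew_gps leq \<omega>) (cst ` X) n) = {E \<otimes>\<^bsub>skew_gps leq \<omega>\<^esub> a | a. a \<in> carrier (skew_gps leq \<omega>)}"
    by (elim bexE conjE) (rule that)
  obtain m where m: "n = Suc m" using n by (cases n) auto
  have P1: "\<forall>p\<in>set_pow (tc_ring::'a ring) X n. cst p \<in> set_pow (skew_gps leq \<omega>) (cst ` X) n"
  proof
    fix p assume pX: "p \<in> set_pow (tc_ring::'a ring) X n"
    have Zc: "\<forall>a\<in>X. cst a \<in> (cst ` X :: ('m \<Rightarrow> 'a) set)" by blast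
    show "cst p \<in> set_pow (skew_gps leq \<omega>) (cst ` X) n"
      using sp_tc_A[OF hom Zc, of p m leq] pX unfolding m by blast
  qed
  have P2: "\<forall>b. (\<forall>p\<in>set_pow (tc_ring::'a ring) X n. p * b = 0) \<longrightarrow> cst b \<in> r_ann (skew_gps leq \<omega>) (set_pow (skew_gps leq \<omega>) (cst ` X) n)"
  proof (intro allI impI)
    fix b :: 'a assume b: "\<forall>p\<in>set_pow (tc_ring::'a ring) X n. p * b = 0"
    have "F \<otimes>\<^bsub>skew_gps leq \<omega>\<^esub> cst b = \<zero>\<^bsub>skew_gps leq \<omega>\<^esub>" if F: "F \<in> set_pow (skew_gps leq \<omega>) (cst ` X) n" for F
    proof -
      obtain p where p: "p \<in> set_pow (tc_ring::'a ring) X n" "F = cst p"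
        using sp_A_tc[OF hom] F unfolding m by blast
      have "p * b = 0" using b p by blast
      moreover have "F \<otimes>\<^bsub>skew_gps leq \<omega>\<^esub> cst b = cst (p * b)" using p(2) cst_cst[OF hom] by simp
      ultimately show ?thesis by (simp add: zero_A cst_def)
    qed
    then show "cst b \<in> r_ann (skew_gps leq \<omega>) (set_pow (skew_gps leq \<omega>) (cst ` X) n)"
      unfolding r_ann_def using cst_carrier[OF om] by blast
  qed
  show "\<exists>n\<ge>1. \<exists>e\<in>carrier tc_ring. e \<otimes>\<^bsub>tc_ring\<^esub> e = e \<and>
          r_ann tc_ring (set_pow tc_ring X n) = {e \<otimes>\<^bsub>tc_ring\<^esub> a |a. a \<in> carrier tc_ring}"
    using transfer[OF som hom arm E EE ann P1 P2] n by blast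
qed

lemma tc_addsub:
  assumes "additive_subgroup I (tc_ring::'a::ring_1 ring)"
  shows "0 \<in> I" "a \<in> I \<Longrightarrow> b \<in> I \<Longrightarrow> a + b \<in> I" "a \<in> I \<Longrightarrow> - a \<in> I"
proof -
  interpret additive_subgroup I "tc_ring::'a ring" by (rule assms)
  show "0 \<in> I" using zero_closed by simp
  show "a \<in> I \<Longrightarrow> b \<in> I \<Longrightarrow> a + b \<in> I" using a_closed by simp
  assume a: "a \<in> I"
  have "\<ominus>\<^bsub>tc_ring\<^esub> a = - a"
    unfolding a_inv_def m_inv_def
    by (rule the_equality) (auto simp: tc_ring_def dest: minus_unique)
  then show "- a \<in> I" using a_inv_closed[OF a] by simp
qed

lemma sum_in_I:
  assumes z: "0 \<in> I" and c: "\<And>a b. a \<in> I \<Longrightarrow> b \<in> I \<Longrightarrow> a + b \<in> I"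
  shows "(\<forall>t\<in>T. f t \<in> I) \<Longrightarrow> sum f T \<in> I"
proof (cases "finite T")
  case True
  then show "(\<forall>t\<in>T. f t \<in> I) \<Longrightarrow> sum f T \<in> I"
    by (induction T rule: finite_induct) (auto simp: z c)
next
  case False then show ?thesis using z by simp
qed

definition liftI :: "('m::monoid_mult \<Rightarrow> 'm \<Rightarrow> bool) \<Rightarrow> ('m \<Rightarrow> 'a::ring_1 \<Rightarrow> 'a) \<Rightarrow> 'a set \<Rightarrow> ('m \<Rightarrow> 'a) set" where
  "liftI leq \<omega> I = {f \<in> carrier (skew_gps leq \<omega>). \<forall>s. f s \<in> I}"

lemma liftI_right_ideal:
  fixes leq :: "'m::monoid_mult \<Rightarrow> 'm \<Rightarrow> bool" and \<omega> :: "'m \<Rightarrow> 'a::ring_1 \<Rightarrow> 'a"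
  assumes som: "strictly_ordered_monoid leq" and I: "right_ideal I (tc_ring::'a ring)"
  shows "right_ideal (liftI leq \<omega> I) (skew_gps leq \<omega>)"
proof -
  have om: "ordered_monoid leq" using som by (rule som_om)
  have sg: "additive_subgroup I (tc_ring::'a ring)" and rc: "\<forall>x\<in>I. \<forall>r. x * r \<in> I"
    using I unfolding right_ideal_def by auto
  note I0 = tc_addsub(1)[OF sg] and Ia = tc_addsub(2)[OF sg] and In = tc_addsub(3)[OF sg]
  have "subgroup (liftI leq \<omega> I) (add_monoid (skew_gps leq \<omega>))"
  proof (rule subgroup.intro)
    show "liftI leq \<omega> I \<subseteq> carrier (add_monoid (skew_gps leq \<omega>))"
      unfolding liftI_def by auto
  next
    fix x y assume x: "x \<in> liftI leq \<omega> I" and y: "y \<in> liftI leq \<omega> I"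
    have gx: "good leq (supp x)" and gy: "good leq (supp y)"
      using x y carrier_A[OF om] unfolding liftI_def by auto
    have "supp (\<lambda>s. x s + y s) \<subseteq> supp x \<union> supp y" unfolding supp_def by auto
    then have "good leq (supp (\<lambda>s. x s + y s))" using good_subset good_Un[OF gx gy] by blast
    then have "(\<lambda>s. x s + y s) \<in> carrier (skew_gps leq \<omega>)" using carrier_A[OF om] by blast
    moreover have "\<forall>s. x s + y s \<in> I" using x y Ia unfolding liftI_def by auto
    ultimately show "x \<otimes>\<^bsub>add_monoid (skew_gps leq \<omega>)\<^esub> y \<in> liftI leq \<omega> I"
      unfolding liftI_def by (simp add: add_A)
  next
    have "good leq (supp (\<lambda>s::'m. 0::'a))" unfolding supp_def good_def by simp
    then have "(\<lambda>s::'m. 0::'a) \<in> carrier (skew_gps leq \<omega>)" using carrier_A[OF om] by blast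
    then show "\<one>\<^bsub>add_monoid (skew_gps leq \<omega>)\<^esub> \<in> liftI leq \<omega> I"
      unfolding liftI_def using I0 by (simp add: zero_A)
  next
    fix x assume x: "x \<in> liftI leq \<omega> I"
    have gx: "good leq (supp x)" using x carrier_A[OF om] unfolding liftI_def by auto
    have "supp (\<lambda>s. - x s) = supp x" unfolding supp_def by auto
    then have nc: "(\<lambda>s. - x s) \<in> carrier (skew_gps leq \<omega>)" using gx carrier_A[OF om, of "\<lambda>s. - x s" \<omega>] by simp
    have "inv\<^bsub>add_monoid (skew_gps leq \<omega>)\<^esub> x = (\<lambda>s. - x s)"
      unfolding m_inv_def
    proof (rule the_equality)
      show "(\<lambda>s. - x s) \<in> carrier (add_monoid (skew_gps leq \<omega>)) \<and>
          x \<otimes>\<^bsub>add_monoid (skew_gps leq \<omega>)\<^esub> (\<lambda>s. - x s) = \<one>\<^bsub>add_monoid (skew_gps leq \<omega>)\<^esub> \<and>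
          (\<lambda>s. - x s) \<otimes>\<^bsub>add_monoid (skew_gps leq \<omega>)\<^esub> x = \<one>\<^bsub>add_monoid (skew_gps leq \<omega>)\<^esub>"
        using nc by (simp add: add_A zero_A)
    next
      fix y assume "y \<in> carrier (add_monoid (skew_gps leq \<omega>)) \<and>
          x \<otimes>\<^bsub>add_monoid (skew_gps leq \<omega>)\<^esub> y = \<one>\<^bsub>add_monoid (skew_gps leq \<omega>)\<^esub> \<and>
          y \<otimes>\<^bsub>add_monoid (skew_gps leq \<omega>)\<^esub> x = \<one>\<^bsub>add_monoid (skew_gps leq \<omega>)\<^esub>"
      then have "(\<lambda>s. y s + x s) = (\<lambda>s. 0)" by (simp add: add_A zero_A)
      then have "y s + x s = 0" for s by metis
      then show "y = (\<lambda>s. - x s)" by (auto simp: eq_neg_iff_add_eq_0)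
    qed
    moreover have "\<forall>s. - x s \<in> I" using x In unfolding liftI_def by auto
    ultimately show "inv\<^bsub>add_monoid (skew_gps leq \<omega>)\<^esub> x \<in> liftI leq \<omega> I"
      using nc unfolding liftI_def by simp
  qed
  then have "additive_subgroup (liftI leq \<omega> I) (skew_gps leq \<omega>)" by (rule additive_subgroupI)
  moreover have "\<forall>x\<in>liftI leq \<omega> I. \<forall>r\<in>carrier (skew_gps leq \<omega>). x \<otimes>\<^bsub>skew_gps leq \<omega>\<^esub> r \<in> liftI leq \<omega> I"
  proof (intro ballI)
    fix x r assume x: "x \<in> liftI leq \<omega> I" and r: "r \<in> carrier (skew_gps leq \<omega>)"
    have xc: "x \<in> carrier (skew_gps leq \<omega>)" and xI: "\<forall>s. x s \<in> I" using x unfolding liftI_def by auto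
    have "(x \<otimes>\<^bsub>skew_gps leq \<omega>\<^esub> r) s \<in> I" for s
      unfolding mult_A
      by (rule sum_in_I[OF I0 Ia]) (use xI rc in auto)
    then show "x \<otimes>\<^bsub>skew_gps leq \<omega>\<^esub> r \<in> liftI leq \<omega> I"
      using mult_carrier[OF som xc r] unfolding liftI_def by blast
  qed
  ultimately show ?thesis unfolding right_ideal_def by blast
qed

lemma compat: "S_compatible \<omega> \<Longrightarrow> (a * b = 0) = (a * \<omega> s b = 0)"
  unfolding S_compatible_def compatible_endo_def by blast

lemma kill:
  fixes leq :: "'m::monoid_mult \<Rightarrow> 'm \<Rightarrow> bool" and \<omega> :: "'m \<Rightarrow> 'a::ring_1 \<Rightarrow> 'a"
  assumes hom: "monoid_hom_End \<omega>" and cp: "S_compatible \<omega>"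
    and rc: "\<forall>x\<in>I. \<forall>r. x * r \<in> I"
  shows "F \<in> set_pow (skew_gps leq \<omega>) (liftI leq \<omega> I) (Suc n) \<Longrightarrow>
         \<forall>p\<in>set_pow (tc_ring::'a ring) I (Suc n). p * c = 0 \<Longrightarrow> F s * c = 0"
proof (induction n arbitrary: F s c)
  case 0
  then have "F s \<in> I" unfolding liftI_def by auto
  then show ?case using 0 by simp
next
  case (Suc n)
  from Suc.prems(1) obtain G H where G: "G \<in> set_pow (skew_gps leq \<omega>) (liftI leq \<omega> I) (Suc n)"
    and H: "H \<in> liftI leq \<omega> I" and F: "F = G \<otimes>\<^bsub>skew_gps leq \<omega>\<^esub> H" by auto
  have HI: "H v \<in> I" for v using H unfolding liftI_def by auto
  have trm: "G u * \<omega> u (H v) * c = 0" for u v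
  proof -
    have "\<forall>p\<in>set_pow (tc_ring::'a ring) I (Suc n). p * (H v * c) = 0"
    proof
      fix p assume p: "p \<in> set_pow (tc_ring::'a ring) I (Suc n)"
      have "p * H v \<in> set_pow (tc_ring::'a ring) I (Suc (Suc n))" using p HI by auto
      then have "p * H v * c = 0" using Suc.prems(2) by blast
      then show "p * (H v * c) = 0" by (simp add: mult.assoc)
    qed
    then have "G u * (H v * c) = 0" using Suc.IH[OF G] by blast
    then have "G u * \<omega> u (H v * c) = 0" using compat[OF cp] by blast
    then have "(G u * \<omega> u (H v)) * \<omega> u c = 0" by (simp add: hom_mult[OF hom] mult.assoc)
    then show ?thesis using compat[OF cp] by blast
  qed
  have "F s * c = (\<Sum>x\<in>{(u, v). u * v = s \<and> G u \<noteq> 0 \<and> H v \<noteq> 0}. (case x of (u, v) \<Rightarrow> G u * \<omega> u (H v)) * c)"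
    unfolding F mult_A by (simp add: sum_distrib_right)
  also have "\<dots> = 0" by (rule sum.neutral) (auto simp: trm)
  finally show ?case .
qed

lemma part2:
  fixes leq :: "'m::monoid_mult \<Rightarrow> 'm \<Rightarrow> bool" and \<omega> :: "'m \<Rightarrow> 'a::ring_1 \<Rightarrow> 'a"
  assumes som: "strictly_ordered_monoid leq" and hom: "monoid_hom_End \<omega>"
    and arm: "S_omega_Armendariz leq \<omega>" and cp: "S_compatible \<omega>"
    and B: "gen_right_qBaer (skew_gps leq \<omega>)"
  shows "gen_right_qBaer (tc_ring :: 'a ring)"
  unfolding gen_right_qBaer_def
proof (intro allI impI)
  fix I :: "'a set" assume I: "right_ideal I tc_ring"
  have om: "ordered_monoid leq" using som by (rule som_om)
  have sg: "additive_subgroup I (tc_ring::'a ring)" and rc: "\<forall>x\<in>I. \<forall>r. x * r \<in> I"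
    using I unfolding right_ideal_def by auto
  have I0: "0 \<in> I" using tc_addsub(1)[OF sg] .
  have "right_ideal (liftI leq \<omega> I) (skew_gps leq \<omega>)" by (rule liftI_right_ideal[OF som I])
  from B[unfolded gen_right_qBaer_def, rule_format, OF this]
  obtain n where n: "n \<ge> 1" and ex: "\<exists>e\<in>carrier (skew_gps leq \<omega>). e \<otimes>\<^bsub>skew_gps leq \<omega>\<^esub> e = e \<and>
     r_ann (skew_gps leq \<omega>) (set_pow (skew_gps leq \<omega>) (liftI leq \<omega> I) n) = {e \<otimes>\<^bsub>skew_gps leq \<omega>\<^esub> a | a. a \<in> carrier (skew_gps leq \<omega>)}"
    by (elim exE conjE) (rule that)
  from ex obtain E where E: "E \<in> carrier (skew_gps leq \<omega>)" and EE: "E \<otimes>\<^bsub>skew_gps leq \<omega>\<^esub> E = E"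
    and ann: "r_ann (skew_gps leq \<omega>) (set_pow (skew_gps leq \<omega>) (liftI leq \<omega> I) n) = {E \<otimes>\<^bsub>skew_gps leq \<omega>\<^esub> a | a. a \<in> carrier (skew_gps leq \<omega>)}"
    by (elim bexE conjE) (rule that)
  obtain m where m: "n = Suc m" using n by (cases n) auto
  have Zc: "\<forall>a\<in>I. cst a \<in> liftI leq \<omega> I"
    using cst_carrier[OF om] I0 unfolding liftI_def cst_def by auto
  have P1: "\<forall>p\<in>set_pow (tc_ring::'a ring) I n. cst p \<in> set_pow (skew_gps leq \<omega>) (liftI leq \<omega> I) n"
  proof
    fix p assume pX: "p \<in> set_pow (tc_ring::'a ring) I n"
    show "cst p \<in> set_pow (skew_gps leq \<omega>) (liftI leq \<omega> I) n"
      using sp_tc_A[OF hom Zc, of p m leq] pX unfolding m by blast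
  qed
  have P2: "\<forall>b. (\<forall>p\<in>set_pow (tc_ring::'a ring) I n. p * b = 0) \<longrightarrow> cst b \<in> r_ann (skew_gps leq \<omega>) (set_pow (skew_gps leq \<omega>) (liftI leq \<omega> I) n)"
  proof (intro allI impI)
    fix b :: 'a assume b: "\<forall>p\<in>set_pow (tc_ring::'a ring) I n. p * b = 0"
    have "F \<otimes>\<^bsub>skew_gps leq \<omega>\<^esub> cst b = \<zero>\<^bsub>skew_gps leq \<omega>\<^esub>" if F: "F \<in> set_pow (skew_gps leq \<omega>) (liftI leq \<omega> I) n" for F
    proof -
      have "F s * b = 0" for s using kill[OF hom cp rc] F b unfolding m by blast
      then have "F s * \<omega> s b = 0" for s using compat[OF cp] by blast
      then show ?thesis unfolding mult_cst[OF hom] zero_A by simp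
    qed
    then show "cst b \<in> r_ann (skew_gps leq \<omega>) (set_pow (skew_gps leq \<omega>) (liftI leq \<omega> I) n)"
      unfolding r_ann_def using cst_carrier[OF om] by blast
  qed
  show "\<exists>n\<ge>1. \<exists>e\<in>carrier tc_ring. e \<otimes>\<^bsub>tc_ring\<^esub> e = e \<and>
          r_ann tc_ring (set_pow tc_ring I n) = {e \<otimes>\<^bsub>tc_ring\<^esub> a |a. a \<in> carrier tc_ring}"
    using transfer[OF som hom arm E EE ann P1 P2] n by blast
qed

theorem proposition3p5:
  fixes leq :: "'m::monoid_mult \<Rightarrow> 'm \<Rightarrow> bool"
    and \<omega> :: "'m \<Rightarrow> 'a::ring_1 \<Rightarrow> 'a"
  assumes "strictly_ordered_monoid leq"
    and "quasitotally_ordered leq"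
    and "monoid_hom_End \<omega>"
    and "S_omega_Armendariz leq \<omega>"
  shows "(gen_right_Baer (skew_gps leq \<omega>) \<longrightarrow> gen_right_Baer (tc_ring :: 'a ring))
       \<and> (S_compatible \<omega> \<and> gen_right_qBaer (skew_gps leq \<omega>) \<longrightarrow> gen_right_qBaer (tc_ring :: 'a ring))"
  using part1[OF assms(1,3,4)] part2[OF assms(1,3,4)] by blast

end
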